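(* Let $p=\sum_{i=0}^n c_iT^i$ be a polynomial of degree $n\ge1$ over $\mathbb S$ and let $a\in\{1,-1\}$ be a root of $p$. Define $l=\min\{i\in\mathbb N: c_i\ne0\}$ and $k=\min\{i\in\mathbb N: c_{i+1}=-a^{i+1-l}c_l\}$. Define $d_{n-1},\dots,d_0\in\mathbb S$ recursively in decreasing order of $i$ by: $d_i=c_{i+1}$ if $c_{i+1}\ne0$ and $i>k$; $d_i=ad_{i+1}$ if $c_{i+1}=0$ and $i>k$; $d_i=-a^{i+l-1}c_l$ if $l\le i\le k$; $d_i=0$ if $0\le i<l$. Then $q=\sum_{i=0}^{n-1}d_iT^i$ satisfies $p\in(T-a)\boxdot q$, i.e. $c_n=d_{n-1}$, $c_0=-ad_0$, and $c_i\in(-ad_i)\boxplus d_{i-1}$ for $i=1,\dots,n-1$.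
   Context: The sign hyperfield $\mathbb S$ is $\{0,1,-1\}$ with the usual multiplication and hyperaddition $0\boxplus a=\{a\}$, $1\boxplus1=\{1\}$, $(-1)\boxplus(-1)=\{-1\}$, $1\boxplus(-1)=\{0,1,-1\}$. Iterated sums: $\boxplus_{i=1}^n a_i=\bigcup_{b\in\boxplus_{i=1}^{n-1}a_i} b\boxplus a_n$. Polynomials over $\mathbb S$ are finitely supported sequences $\sum c_iT^i$ of degree the largest $k$ with $c_k\ne0$; hyperproduct $p\boxdot q=\{\sum e_iT^i : e_i\in \boxplus_{k+l=i} c_kd_l\}$. An element $a\in\mathbb S$ is a root of $p=\sum c_iT^i$ if $0\in\boxplus_i c_ia^i$. *)

theory Defs
  imports Complex_Main
begin

text \<open>The sign hyperfield S = {0,1,-1}, modelled inside the reals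
  (its multiplication is the usual one).\<close>

definition sgn_hf :: "real set" where
  "sgn_hf = {0, 1, -1}"

definition hplus :: "real \<Rightarrow> real \<Rightarrow> real set" where
  "hplus a b = (if a = 0 then {b} else if b = 0 then {a}
                else if a = b then {a} else {0, 1, -1})"

text \<open>Iterated hypersum of a list, left to right:
  the sum of a_1..a_n is the union over b in the sum of a_1..a_(n-1) of b hplus a_n.
  Starting from {0} is harmless since 0 hplus a = {a}.\<close>
definition hsum :: "real list \<Rightarrow> real set" where
  "hsum xs = foldl (\<lambda>S x. \<Union>b\<in>S. hplus b x) {0} xs"

text \<open>Polynomials over S as coefficient sequences nat => real (finitely supported,
  values in S). Hyperproduct of two polynomials.\<close>
definition hprod :: "(nat \<Rightarrow> real) \<Rightarrow> (nat \<Rightarrow> real) \<Rightarrow> (nat \<Rightarrow> real) set" where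
  "hprod c d = {e. \<forall>i. e i \<in> hsum (map (\<lambda>j. c j * d (i - j)) [0..<Suc i])}"

definition is_root :: "(nat \<Rightarrow> real) \<Rightarrow> nat \<Rightarrow> real \<Rightarrow> bool" where
  "is_root c n a \<longleftrightarrow> 0 \<in> hsum (map (\<lambda>i. c i * a ^ i) [0..<Suc n])"

end

theory Submission
  imports Defs
begin

lemma pw: assumes "a \<in> {1,-1::real}" shows "a powi m = (if even m then 1 else a)"
  using assms by auto

lemma pwn: assumes "a \<in> {1,-1::real}" shows "a ^ m = (if even m then 1 else a)"
  using assms by auto

lemma hp_right: "y \<in> {1,-1} \<Longrightarrow> y \<in> hplus x y"
  unfolding hplus_def by auto

lemma hp_cancel: "0 \<in> hplus (-x) (x::real)"
  unfolding hplus_def by auto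

lemma hp_all: "x \<noteq> 0 \<Longrightarrow> z \<in> {0,1,-1} \<Longrightarrow> z \<in> hplus x (-x::real)"
  unfolding hplus_def by auto

lemma hp_zero: "hplus x 0 = {x}" "hplus 0 x = {x}"
  unfolding hplus_def by auto

lemma F0: "\<forall>x\<in>set xs. x = 0 \<Longrightarrow> foldl (\<lambda>S x. \<Union>b\<in>S. hplus b x) S xs = S"
  by (induction xs arbitrary: S) (auto simp: hp_zero)

lemma F1: "s \<noteq> 0 \<Longrightarrow> set xs \<subseteq> {0,s} \<Longrightarrow> S \<subseteq> {s} \<Longrightarrow>
   foldl (\<lambda>S x. \<Union>b\<in>S. hplus b x) S xs \<subseteq> {s}"
proof (induction xs arbitrary: S)
  case Nil then show ?case by simp
next
  case (Cons x xs)
  have "(\<Union>b\<in>S. hplus b x) \<subseteq> {s}"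
    using Cons.prems by (auto simp: hplus_def)
  then show ?case using Cons by simp
qed

lemma F2: "s \<noteq> 0 \<Longrightarrow> set xs \<subseteq> {0,s} \<Longrightarrow> S \<subseteq> {0,s} \<Longrightarrow> s \<in> set xs \<Longrightarrow>
   foldl (\<lambda>S x. \<Union>b\<in>S. hplus b x) S xs \<subseteq> {s}"
proof (induction xs arbitrary: S)
  case Nil then show ?case by simp
next
  case (Cons x xs)
  show ?case
  proof (cases "x = s")
    case True
    have "(\<Union>b\<in>S. hplus b x) \<subseteq> {s}"
      using Cons.prems True by (auto simp: hplus_def)
    then show ?thesis using Cons.prems F1[of s xs] by simp
  next
    case False
    then have "x = 0" "s \<in> set xs" using Cons.prems by auto
    then show ?thesis using Cons by (simp add: hp_zero)
  qed
qed

lemma hsum_prod: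
  assumes "i \<ge> 1"
  shows "hsum (map (\<lambda>j. (if j = 0 then - a else if j = 1 then 1 else 0) * D (i - j)) [0..<Suc i])
     = hplus (- a * D i) (D (i - 1))"
proof -
  have "[0..<Suc i] = [0,1] @ [2..<Suc i]" using assms
    by (simp add: upt_conv_Cons numeral_2_eq_2 del: upt_Suc)
  then show ?thesis unfolding hsum_def
    by (simp add: F0 hp_zero)
qed

lemma hsum_prod0:
  "hsum (map (\<lambda>j. (if j = 0 then - a else if j = 1 then 1 else 0) * D (0 - j)) [0..<Suc 0])
     = {- a * D 0}"
  unfolding hsum_def by (simp add: hp_zero)

theorem mainTheorem11:
  fixes c d :: "nat \<Rightarrow> real" and n :: nat and a :: real
  assumes coeffs: "\<forall>i. c i \<in> sgn_hf"
    and fin: "\<forall>i>n. c i = 0"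
    and deg: "c n \<noteq> 0"
    and n1: "n \<ge> 1"
    and a: "a \<in> {1, -1}"
    and root: "is_root c n a"
    and d_rec: "\<forall>i<n. d i =
      (let l = (LEAST i. c i \<noteq> 0);
           k = (LEAST i. c (i + 1) = - (a powi (int (i + 1) - int l)) * c l)
       in if k < i \<and> c (i + 1) \<noteq> 0 then c (i + 1)
          else if k < i \<and> c (i + 1) = 0 then a * d (i + 1)
          else if l \<le> i \<and> i \<le> k then - (a powi (int i + int l - 1)) * c l
          else 0)"
  shows "c \<in> hprod (\<lambda>j. if j = 0 then - a else if j = 1 then 1 else 0)
                   (\<lambda>i. if i < n then d i else 0)
       \<and> c n = d (n - 1) \<and> c 0 = - a * d 0
       \<and> (\<forall>i\<in>{1..n-1}. c i \<in> hplus (- a * d i) (d (i - 1)))"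
proof -
  define L where "L = (LEAST i. c i \<noteq> 0)"
  define P where "P = (\<lambda>i. c (i + 1) = - (a powi (int (i + 1) - int L)) * c L)"
  define K where "K = (LEAST i. P i)"
  have cS: "c i \<in> {0,1,-1}" for i using coeffs by (simp add: sgn_hf_def)
  have aa: "a * a = 1" using a by auto
  have a0: "a \<noteq> 0" using a by auto
  have cL: "c L \<noteq> 0" unfolding L_def using deg by (rule LeastI)
  have belowL: "i < L \<Longrightarrow> c i = 0" for i unfolding L_def using not_less_Least by blast
  have Ln: "L \<le> n" unfolding L_def using deg by (rule Least_le)
  have cL1: "c L \<in> {1,-1}" using cS[of L] cL by auto
  have dr: "d i = (if K < i \<and> c (i + 1) \<noteq> 0 then c (i + 1)
          else if K < i \<and> c (i + 1) = 0 then a * d (i + 1)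
          else if L \<le> i \<and> i \<le> K then - (a powi (int i + int L - 1)) * c L
          else 0)" if "i < n" for i
  proof -
    have "d i = (let l = (LEAST i. c i \<noteq> 0);
           k = (LEAST i. c (i + 1) = - (a powi (int (i + 1) - int l)) * c l)
       in if k < i \<and> c (i + 1) \<noteq> 0 then c (i + 1)
          else if k < i \<and> c (i + 1) = 0 then a * d (i + 1)
          else if l \<le> i \<and> i \<le> k then - (a powi (int i + int l - 1)) * c l
          else 0)" by (rule d_rec[rule_format, OF that])
    then show ?thesis by (simp only: K_def P_def L_def Let_def)
  qed
  have "\<exists>j. L < j \<and> j \<le> n \<and> c j * a ^ j = - (c L * a ^ L)"
  proof (rule ccontr)
    assume nex: "\<not> ?thesis"
    define s where "s = c L * a ^ L"
    have s1: "s \<in> {1,-1}" using cL1 a unfolding s_def by (auto simp: pwn)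
    have sub: "set (map (\<lambda>i. c i * a ^ i) [0..<Suc n]) \<subseteq> {0,s}"
    proof
      fix x assume "x \<in> set (map (\<lambda>i. c i * a ^ i) [0..<Suc n])"
      then obtain i where "i \<in> set [0..<Suc n]" "x = c i * a ^ i" by (auto simp del: upt_Suc)
      then have i: "i \<le> n" "x = c i * a ^ i" by auto
      have x3: "x \<in> {0,1,-1}" using cS[of i] a i(2) by (auto simp: pwn)
      consider "i < L" | "i = L" | "L < i" by linarith
      then show "x \<in> {0,s}"
      proof cases
        case 1 then show ?thesis using belowL i by simp
      next
        case 2 then show ?thesis using i s_def by simp
      next
        case 3 then have "x \<noteq> -s" using nex i s_def by auto
        then show ?thesis using x3 s1 by auto
      qed
    qed
    have "L \<in> set [0..<Suc n]" using Ln by (simp del: upt_Suc)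
    then have "s \<in> set (map (\<lambda>i. c i * a ^ i) [0..<Suc n])" unfolding s_def by (simp del: upt_Suc)
    then have "hsum (map (\<lambda>i. c i * a ^ i) [0..<Suc n]) \<subseteq> {s}"
      unfolding hsum_def apply (intro F2[OF _ sub]) using s1 by (auto simp del: upt_Suc)
    then show False using root s1 unfolding is_root_def by auto
  qed
  then obtain j where j: "L < j" "j \<le> n" "c j * a ^ j = - (c L * a ^ L)" by blast
  have Pj: "P (j - 1)"
  proof -
    have e: "a powi (int j - int L) = a ^ j * a ^ L"
      using a by (auto simp: pw pwn)
    have "c j = c j * (a ^ j * a ^ j)" using a by (auto simp: pwn)
    also have "\<dots> = (c j * a ^ j) * a ^ j" by (simp only: mult.assoc)
    also have "\<dots> = - (a ^ j * a ^ L) * c L" unfolding j(3) by (simp add: mult_ac)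
    finally show ?thesis unfolding P_def using j(1) e by (simp add: of_nat_diff)
  qed
  have PK: "P K" unfolding K_def using Pj by (rule LeastI)
  have Kj: "K \<le> j - 1" unfolding K_def using Pj by (rule Least_le)
  have Kn: "K \<le> n - 1" using Kj j by linarith
  have LK: "L \<le> K"
  proof (rule ccontr)
    assume "\<not> L \<le> K"
    then have "K + 1 < L \<or> K + 1 = L" by linarith
    then show False
    proof
      assume "K + 1 < L"
      then have "c (K+1) = 0" using belowL by simp
      moreover have "a powi (int (K + 1) - int L) \<noteq> 0" using a by (auto simp: pw)
      ultimately show False using PK cL unfolding P_def by simp
    next
      assume "K + 1 = L" then show False using PK cL unfolding P_def by simp
    qed
  qed
  have dA: "i < L \<Longrightarrow> d i = 0" for i using dr[of i] LK Ln by auto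
  have dB: "L \<le> i \<Longrightarrow> i \<le> K \<Longrightarrow> d i = - (a powi (int i + int L - 1)) * c L" for i
    using dr[of i] Kn n1 by auto
  have dC: "K < i \<Longrightarrow> i < n \<Longrightarrow> c (i+1) \<noteq> 0 \<Longrightarrow> d i = c (i+1)" for i using dr[of i] by auto
  have dD: "K < i \<Longrightarrow> i < n \<Longrightarrow> c (i+1) = 0 \<Longrightarrow> d i = a * d (i+1)" for i using dr[of i] by auto
  have dK: "d K = c (K+1)"
  proof -
    have "d K = - (a powi (int K + int L - 1)) * c L" using dB LK by simp
    also have "a powi (int K + int L - 1) = a powi (int (K + 1) - int L)"
    proof -
      have "even (int K + int L - 1) = even (int (K + 1) - int L)" by presburger
      then show ?thesis by (simp only: pw[OF a])
    qed
    finally show ?thesis using PK unfolding P_def by simp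
  qed
  have cK1: "c (K+1) \<in> {1,-1}" using dK cS[of "K+1"] PK cL a unfolding P_def by (auto simp: pw)
  have main: "c i \<in> hplus (- a * d i) (d (i - 1))" if i: "1 \<le> i" "i \<le> n - 1" for i
  proof -
    consider "i < L" | "i = L" | "L < i \<and> i \<le> K" | "i = K + 1" | "K + 1 < i" by linarith
    then show ?thesis
    proof cases
      case 1 then show ?thesis using belowL dA by (simp add: hp_zero)
    next
      case 2
      have o: "odd (int L + int L - 1)" by presburger
      then have "a powi (int L + int L - 1) = a" using pw[OF a] by simp
      then have "d L = - (a * c L)" using dB[of L] LK by simp
      then have "- a * d L = (a * a) * c L" by simp
      then have "- a * d L = c L" using aa by simp
      then show ?thesis using 2 dA[of "i - 1"] i by (simp add: hp_zero)
    next
      case 3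
      have di: "d i = - (a powi (int i + int L - 1)) * c L" by (rule dB) (use 3 in auto)
      have di1: "d (i-1) = - (a powi (int (i - 1) + int L - 1)) * c L" by (rule dB) (use 3 in auto)
      define m where "m = int i + int L - 1"
      have m1: "int (i - 1) + int L - 1 = m - 1" using i unfolding m_def by simp
      have "d (i - 1) = - (- a * d i)"
      proof (cases "even m")
        case True
        then have "odd (m - 1)" by simp
        then show ?thesis using True unfolding di di1 m1 m_def[symmetric] pw[OF a] by simp
      next
        case False
        then have "even (m - 1)" by simp
        then show ?thesis using False aa unfolding di di1 m1 m_def[symmetric] pw[OF a]
          by (simp add: mult.assoc[symmetric])
      qed
      moreover have "- a * d i \<noteq> 0" using di cL a by (auto simp: pw)
      ultimately show ?thesis using hp_all[of "- a * d i" "c i"] cS[of i] by simp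
    next
      case 4 then show ?thesis using dK cK1 hp_right by simp
    next
      case 5
      show ?thesis
      proof (cases "c i = 0")
        case True
        have "d (i - 1) = a * d i" using dD[of "i - 1"] 5 i True by simp
        then show ?thesis using True hp_cancel[of "a * d i"] by simp
      next
        case False
        have "d (i - 1) = c i" using dC[of "i - 1"] 5 i False by simp
        then show ?thesis using hp_right cS[of i] False by auto
      qed
    qed
  qed
  have top: "c n = d (n - 1)"
  proof (cases "K < n - 1")
    case True then show ?thesis using dC[of "n-1"] deg n1 by simp
  next
    case False then have "K = n - 1" using Kn by simp
    then show ?thesis using dK n1 by simp
  qed
  have bot: "c 0 = - a * d 0"
  proof (cases "L = 0")
    case True
    have "d 0 = - (a powi (- 1)) * c 0" using dB[of 0] True by simp
    then show ?thesis using a True by (auto simp: pw)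
  next
    case False then show ?thesis using belowL dA by simp
  qed
  have prod: "c \<in> hprod (\<lambda>j. if j = 0 then - a else if j = 1 then 1 else 0)
                   (\<lambda>i. if i < n then d i else 0)"
    unfolding hprod_def
  proof (intro CollectI allI)
    fix i
    let ?D = "\<lambda>i. if i < n then d i else 0"
    show "c i \<in> hsum (map (\<lambda>j. (if j = 0 then - a else if j = 1 then 1 else 0) * ?D (i - j)) [0..<Suc i])"
    proof (cases "i = 0")
      case True then show ?thesis using hsum_prod0[of a ?D] bot n1 by simp
    next
      case False
      then have h: "hsum (map (\<lambda>j. (if j = 0 then - a else if j = 1 then 1 else 0) * ?D (i - j)) [0..<Suc i])
        = hplus (- a * ?D i) (?D (i - 1))" using hsum_prod[of i a ?D] by simp
      consider "i < n" | "i = n" | "i > n" by linarith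
      then show ?thesis
      proof cases
        case 1
        then have "i - 1 < n" "i \<le> n - 1" by auto
        then show ?thesis apply (subst h) using main[of i] False 1 by simp
      next
        case 2 then show ?thesis apply (subst h) using top n1 by (simp add: hp_zero)
      next
        case 3
        then have "\<not> i - 1 < n" "\<not> i < n" by auto
        then show ?thesis apply (subst h) using fin 3 by (simp add: hp_zero)
      qed
    qed
  qed
  have mainB: "\<forall>i\<in>{1..n-1}. c i \<in> hplus (- a * d i) (d (i - 1))"
  proof
    fix i assume "i \<in> {1..n-1}"
    then show "c i \<in> hplus (- a * d i) (d (i - 1))" using main by simp
  qed
  show ?thesis using prod top bot mainB by blast
qed

end
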